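(* For $\lambda\in\Lambda$ let $E_\lambda$ be a congruence on $\overline{\boldsymbol{T}(X_1,\ldots,X_n)}$, and let $E$ be the congruence generated by $\bigcup_{\lambda\in\Lambda}E_\lambda$. Let $F_1,F_2$ be congruences on $\overline{\boldsymbol{T}(X_1,\ldots,X_n)}$. Then: (1) $\boldsymbol{V}(\Delta)=\mathbb{R}^n$ and $\boldsymbol{V}\big(\overline{\boldsymbol{T}(X_1,\ldots,X_n)}\times\overline{\boldsymbol{T}(X_1,\ldots,X_n)}\big)=\varnothing$; (2) $\boldsymbol{V}(E)=\bigcap_{\lambda\in\Lambda}\boldsymbol{V}(E_\lambda)$; (3) $\boldsymbol{V}(F_1\rtimes F_2)=\boldsymbol{V}(F_1)\cup\boldsymbol{V}(F_2)$.
   Context: $\boldsymbol{T}=\mathbb{R}\cup\{-\infty\}$ with $a\oplus b=\max\{a,b\}$, $a\odot b=a+b$. $\overline{\boldsymbol{T}[X_1,\ldots,X_n]}$ is the tropical polynomial semiring modulo identifying polynomials defining the same function $\boldsymbol{T}^n\to\boldsymbol{T}$; it is cancellative and $\overline{\boldsymbol{T}(X_1,\ldots,X_n)}$ is its semifield of fractions. Each element defines a function $\mathbb{R}^n\to\boldsymbol{T}$ (quotients evaluated as differences); $-\infty$ is the constant $-\infty$, other elements are real valued. A congruence is an equivalence relation compatible with $\oplus$ and $\odot$; $\Delta$ is the diagonal (trivial congruence); the congruence generated by a set is the smallest congruence containing it. $\boldsymbol{V}(E)=\{x\in\mathbb{R}^n\mid f(x)=g(x)\ \forall(f,g)\in E\}$.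 The twisted product is $(f_1,f_2)\rtimes(g_1,g_2):=(f_1\odot g_1\oplus f_2\odot g_2,\ f_1\odot g_2\oplus f_2\odot g_1)$, and $F_1\rtimes F_2$ is the congruence generated by $\{a\rtimes b\mid a\in F_1,b\in F_2\}$. *)

theory Defs
  imports "HOL-Analysis.Analysis"
begin

text \<open>The tropical semifield T = R \<union> {-\<infinity>} is modelled inside ereal (the value +\<infinity>
never occurs); tropical addition is max, tropical multiplication is +.
Elements of the semiring of tropical polynomial functions and of its semifield of
fractions are represented by the functions R^n \<rightarrow> T they define (this map is
injective, so the quotient/fraction constructions are faithfully represented).
The number of variables n is the cardinality of the finite index type 'n.\<close>

type_synonym 'n tfun = "real^'n \<Rightarrow> ereal"
type_synonym 'n trel = "('n tfun \<times> 'n tfun) set"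

definition tadd :: "'n tfun \<Rightarrow> 'n tfun \<Rightarrow> 'n tfun" (infixl "\<oplus>\<^sub>t" 65) where
  "f \<oplus>\<^sub>t g = (\<lambda>x. max (f x) (g x))"

definition tmul :: "'n tfun \<Rightarrow> 'n tfun \<Rightarrow> 'n tfun" (infixl "\<odot>\<^sub>t" 70) where
  "f \<odot>\<^sub>t g = (\<lambda>x. f x + g x)"

definition tmonom :: "real \<Rightarrow> ('n::finite \<Rightarrow> nat) \<Rightarrow> 'n tfun" where
  "tmonom c a = (\<lambda>x. ereal (c + (\<Sum>i\<in>UNIV. real (a i) * x $ i)))"

text \<open>Tropical polynomial functions: the constant -\<infinity> (empty sum) or a finite
nonempty tropical sum of monomials.\<close>
definition tpoly :: "('n::finite) tfun set" where
  "tpoly = {\<lambda>x. -\<infinity>} \<union>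
     {f. \<exists>S :: (real \<times> ('n \<Rightarrow> nat)) set. finite S \<and> S \<noteq> {} \<and>
          f = (\<lambda>x. Max ((\<lambda>(c,a). tmonom c a x) ` S))}"

definition trat :: "('n::finite) tfun set" where
  "trat = {\<lambda>x. f x - g x | f g. f \<in> tpoly \<and> g \<in> tpoly \<and> g \<noteq> (\<lambda>x. -\<infinity>)}"

definition tcongruence :: "('n::finite) trel \<Rightarrow> bool" where
  "tcongruence C \<longleftrightarrow> C \<subseteq> trat \<times> trat \<and> refl_on trat C \<and> sym C \<and> trans C \<and>
     (\<forall>a b c. (a, b) \<in> C \<and> c \<in> trat \<longrightarrow> (a \<oplus>\<^sub>t c, b \<oplus>\<^sub>t c) \<in> C \<and> (a \<odot>\<^sub>t c, b \<odot>\<^sub>t c) \<in> C)"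

definition tcong_gen :: "('n::finite) trel \<Rightarrow> 'n trel" where
  "tcong_gen R = \<Inter>{C. tcongruence C \<and> R \<subseteq> C}"

definition tV :: "('n::finite) trel \<Rightarrow> (real^'n) set" where
  "tV E = {x. \<forall>(f, g) \<in> E. f x = g x}"

definition twist :: "'n tfun \<times> 'n tfun \<Rightarrow> 'n tfun \<times> 'n tfun \<Rightarrow> 'n tfun \<times> 'n tfun" where
  "twist p q = (case p of (f1, f2) \<Rightarrow> case q of (g1, g2) \<Rightarrow>
     (f1 \<odot>\<^sub>t g1 \<oplus>\<^sub>t f2 \<odot>\<^sub>t g2, f1 \<odot>\<^sub>t g2 \<oplus>\<^sub>t f2 \<odot>\<^sub>t g1))"

definition twisted_prod :: "('n::finite) trel \<Rightarrow> 'n trel \<Rightarrow> 'n trel" where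
  "twisted_prod F1 F2 = tcong_gen {twist a b | a b. a \<in> F1 \<and> b \<in> F2}"

end

theory Submission
  imports Defs
begin

definition pm :: "(real \<times> ('n::finite \<Rightarrow> nat)) set \<Rightarrow> 'n tfun" where
  "pm S = (\<lambda>x. Max ((\<lambda>(c,a). tmonom c a x) ` S))"

lemma tpoly_cases:
  assumes "f \<in> tpoly"
  shows "f = (\<lambda>x. -\<infinity>) \<or> (\<exists>S. finite S \<and> S \<noteq> {} \<and> f = pm S)"
  using assms unfolding tpoly_def pm_def by auto

lemma pm_in: "finite S \<Longrightarrow> S \<noteq> {} \<Longrightarrow> pm S \<in> tpoly"
  unfolding tpoly_def pm_def by auto

lemma pm_real:
  assumes "finite S" "S \<noteq> {}"
  shows "\<exists>r. pm S x = ereal r"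
proof -
  have "Max ((\<lambda>(c,a). tmonom c a x) ` S) \<in> (\<lambda>(c,a). tmonom c a x) ` S"
    using assms by (intro Max_in) auto
  then obtain c a where "(c,a) \<in> S" "pm S x = tmonom c a x" unfolding pm_def by auto
  then show ?thesis unfolding tmonom_def by auto
qed

lemma tpoly_val: "f \<in> tpoly \<Longrightarrow> f x = -\<infinity> \<or> (\<exists>r. f x = ereal r)"
  using tpoly_cases pm_real by metis

lemma tpoly_real: "f \<in> tpoly \<Longrightarrow> f \<noteq> (\<lambda>x. -\<infinity>) \<Longrightarrow> \<exists>r. f x = ereal r"
  using tpoly_cases pm_real by metis

lemma pm_Un:
  assumes "finite S" "S \<noteq> {}" "finite T" "T \<noteq> {}"
  shows "pm (S \<union> T) x = max (pm S x) (pm T x)"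
  unfolding pm_def image_Un using assms by (intro Max_Un) auto

lemma tpoly_add:
  assumes "f \<in> tpoly" "g \<in> tpoly" shows "f \<oplus>\<^sub>t g \<in> tpoly"
proof -
  consider "f = (\<lambda>x. -\<infinity>)" | "g = (\<lambda>x. -\<infinity>)"
    | S T where "finite S" "S \<noteq> {}" "f = pm S" "finite T" "T \<noteq> {}" "g = pm T"
    using tpoly_cases[OF assms(1)] tpoly_cases[OF assms(2)] by blast
  then show ?thesis
  proof cases
    case 1
    have "f \<oplus>\<^sub>t g = g"
    proof
      fix x show "(f \<oplus>\<^sub>t g) x = g x" using 1 by (simp add: tadd_def)
    qed
    then show ?thesis using assms by simp
  next
    case 2
    have "f \<oplus>\<^sub>t g = f"
    proof
      fix x show "(f \<oplus>\<^sub>t g) x = f x" using 2 by (simp add: tadd_def)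
    qed
    then show ?thesis using assms by simp
  next
    case 3
    have "f \<oplus>\<^sub>t g = pm (S \<union> T)"
    proof
      fix x show "(f \<oplus>\<^sub>t g) x = pm (S \<union> T) x"
        using 3 pm_Un[of S T x] by (simp add: tadd_def)
    qed
    moreover have "finite (S \<union> T)" "S \<union> T \<noteq> {}" using 3 by auto
    ultimately show ?thesis using pm_in by metis
  qed
qed

lemma tmonom_mul: "tmonom (c+d) (\<lambda>i. a i + b i) x = tmonom c a x + tmonom d b x"
proof -
  have "(\<Sum>i\<in>UNIV. real (a i + b i) * x $ i) = (\<Sum>i\<in>UNIV. real (a i) * x $ i) + (\<Sum>i\<in>UNIV. real (b i) * x $ i)"
    by (simp add: sum.distrib distrib_right)
  then show ?thesis unfolding tmonom_def by simp
qed

definition mulp :: "(real \<times> ('n::finite \<Rightarrow> nat)) \<Rightarrow> (real \<times> ('n \<Rightarrow> nat)) \<Rightarrow> (real \<times> ('n \<Rightarrow> nat))" where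
  "mulp p q = (fst p + fst q, \<lambda>i. snd p i + snd q i)"

definition mv :: "real^'n \<Rightarrow> (real \<times> ('n::finite \<Rightarrow> nat)) \<Rightarrow> ereal" where
  "mv x p = tmonom (fst p) (snd p) x"

lemma pm_alt: "pm S x = Max (mv x ` S)"
  unfolding pm_def mv_def by (simp add: case_prod_beta)

lemma mv_mulp: "mv x (mulp p q) = mv x p + mv x q"
  unfolding mv_def mulp_def using tmonom_mul by simp

lemma pm_mul:
  assumes "finite S" "S \<noteq> {}" "finite T" "T \<noteq> {}"
  shows "pm S x + pm T x = pm ((\<lambda>(p,q). mulp p q) ` (S \<times> T)) x"
proof -
  have "Max (mv x ` S) \<in> mv x ` S" using assms by (intro Max_in) auto
  then obtain s where s: "s \<in> S" "Max (mv x ` S) = mv x s" by auto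
  have "Max (mv x ` T) \<in> mv x ` T" using assms by (intro Max_in) auto
  then obtain t where t: "t \<in> T" "Max (mv x ` T) = mv x t" by auto
  have img: "mv x ` ((\<lambda>(p,q). mulp p q) ` (S \<times> T)) = (\<lambda>(p,q). mv x p + mv x q) ` (S \<times> T)"
    unfolding image_image by (simp add: case_prod_beta mv_mulp)
  have "Max ((\<lambda>(p,q). mv x p + mv x q) ` (S \<times> T)) = mv x s + mv x t"
  proof (rule Max_eqI)
    show "finite ((\<lambda>(p,q). mv x p + mv x q) ` (S \<times> T))" using assms by simp
  next
    fix y assume "y \<in> (\<lambda>(p,q). mv x p + mv x q) ` (S \<times> T)"
    then obtain p q where pq: "p \<in> S" "q \<in> T" "y = mv x p + mv x q" by auto
    have "mv x p \<le> Max (mv x ` S)" using pq assms by simp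
    moreover have "mv x q \<le> Max (mv x ` T)" using pq assms by simp
    ultimately show "y \<le> mv x s + mv x t" using pq s t by (simp add: add_mono)
  next
    have "(s,t) \<in> S \<times> T" using s t by simp
    then show "mv x s + mv x t \<in> (\<lambda>(p,q). mv x p + mv x q) ` (S \<times> T)" by force
  qed
  then show ?thesis using s t img unfolding pm_alt by simp
qed

lemma tpoly_mul:
  assumes "f \<in> tpoly" "g \<in> tpoly" shows "f \<odot>\<^sub>t g \<in> tpoly"
proof -
  consider "f = (\<lambda>x. -\<infinity>)" | "g = (\<lambda>x. -\<infinity>)"
    | S T where "finite S" "S \<noteq> {}" "f = pm S" "finite T" "T \<noteq> {}" "g = pm T"
    using tpoly_cases[OF assms(1)] tpoly_cases[OF assms(2)] by blast
  then show ?thesis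
  proof cases
    case 1
    have "f \<odot>\<^sub>t g = (\<lambda>x. -\<infinity>)"
    proof
      fix x have "g x \<noteq> \<infinity>" using tpoly_val[OF assms(2), of x] by auto
      then show "(f \<odot>\<^sub>t g) x = -\<infinity>" using 1 by (simp add: tmul_def)
    qed
    then show ?thesis by (simp add: tpoly_def)
  next
    case 2
    have "f \<odot>\<^sub>t g = (\<lambda>x. -\<infinity>)"
    proof
      fix x have "f x \<noteq> \<infinity>" using tpoly_val[OF assms(1), of x] by auto
      then show "(f \<odot>\<^sub>t g) x = -\<infinity>" using 2 by (simp add: tmul_def)
    qed
    then show ?thesis by (simp add: tpoly_def)
  next
    case 3
    have "f \<odot>\<^sub>t g = pm ((\<lambda>(p,q). mulp p q) ` (S \<times> T))"
    proof
      fix x show "(f \<odot>\<^sub>t g) x = pm ((\<lambda>(p,q). mulp p q) ` (S \<times> T)) x"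
        using 3 pm_mul[of S T x] by (simp add: tmul_def)
    qed
    moreover have "finite ((\<lambda>(p,q). mulp p q) ` (S \<times> T))"
      "(\<lambda>(p,q). mulp p q) ` (S \<times> T) \<noteq> {}" using 3 by auto
    ultimately show ?thesis using pm_in by metis
  qed
qed

lemma ereal_mul_id:
  assumes "p1 \<noteq> \<infinity>" "p2 \<noteq> \<infinity>"
  shows "(p1 - ereal a) + (p2 - ereal b) = (p1 + p2) - (ereal a + ereal b)"
  using assms by (cases p1; cases p2) auto

lemma ereal_add_id:
  assumes "p1 \<noteq> \<infinity>" "p2 \<noteq> \<infinity>"
  shows "max (p1 - ereal a) (p2 - ereal b) = max (p1 + ereal b) (p2 + ereal a) - (ereal a + ereal b)"
  using assms by (cases p1; cases p2) (auto simp: max_def)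

lemma tpoly_ninf: assumes "f \<in> tpoly" shows "f x \<noteq> \<infinity>"
  using tpoly_val[OF assms, of x] by auto

lemma trat_closed:
  assumes "f \<in> trat" "g \<in> trat"
  shows "f \<oplus>\<^sub>t g \<in> trat" "f \<odot>\<^sub>t g \<in> trat"
proof -
  obtain p1 q1 where 1: "f = (\<lambda>x. p1 x - q1 x)" "p1 \<in> tpoly" "q1 \<in> tpoly" "q1 \<noteq> (\<lambda>x. -\<infinity>)"
    using assms(1) unfolding trat_def by blast
  obtain p2 q2 where 2: "g = (\<lambda>x. p2 x - q2 x)" "p2 \<in> tpoly" "q2 \<in> tpoly" "q2 \<noteq> (\<lambda>x. -\<infinity>)"
    using assms(2) unfolding trat_def by blast
  have qq: "q1 \<odot>\<^sub>t q2 \<noteq> (\<lambda>x. -\<infinity>)"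
  proof
    assume "q1 \<odot>\<^sub>t q2 = (\<lambda>x. -\<infinity>)"
    then have "q1 x + q2 x = -\<infinity>" for x by (metis tmul_def)
    moreover obtain r s where "q1 undefined = ereal r" "q2 undefined = ereal s"
      using tpoly_real 1 2 by metis
    ultimately show False by (metis plus_ereal.simps(1) MInfty_neq_ereal(1))
  qed
  have eqm: "f \<odot>\<^sub>t g = (\<lambda>x. (p1 \<odot>\<^sub>t p2) x - (q1 \<odot>\<^sub>t q2) x)"
  proof
    fix x
    obtain r s where "q1 x = ereal r" "q2 x = ereal s" using tpoly_real 1 2 by metis
    then show "(f \<odot>\<^sub>t g) x = (p1 \<odot>\<^sub>t p2) x - (q1 \<odot>\<^sub>t q2) x"
      using 1 2 ereal_mul_id[of "p1 x" "p2 x" r s, OF tpoly_ninf[OF 1(2)] tpoly_ninf[OF 2(2)]]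
      by (simp add: tmul_def)
  qed
  show "f \<odot>\<^sub>t g \<in> trat" unfolding trat_def
    apply (rule CollectI, rule exI[of _ "p1 \<odot>\<^sub>t p2"], rule exI[of _ "q1 \<odot>\<^sub>t q2"], intro conjI)
      apply (rule eqm)
      apply (rule tpoly_mul[OF 1(2) 2(2)])
     apply (rule tpoly_mul[OF 1(3) 2(3)])
    apply (rule qq)
    done
  have eqa: "f \<oplus>\<^sub>t g = (\<lambda>x. (p1 \<odot>\<^sub>t q2 \<oplus>\<^sub>t p2 \<odot>\<^sub>t q1) x - (q1 \<odot>\<^sub>t q2) x)"
  proof
    fix x
    obtain r s where "q1 x = ereal r" "q2 x = ereal s" using tpoly_real 1 2 by metis
    then show "(f \<oplus>\<^sub>t g) x = (p1 \<odot>\<^sub>t q2 \<oplus>\<^sub>t p2 \<odot>\<^sub>t q1) x - (q1 \<odot>\<^sub>t q2) x"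
      using 1 2 ereal_add_id[of "p1 x" "p2 x" r s, OF tpoly_ninf[OF 1(2)] tpoly_ninf[OF 2(2)]]
      by (simp add: tmul_def tadd_def)
  qed
  show "f \<oplus>\<^sub>t g \<in> trat" unfolding trat_def
    apply (rule CollectI, rule exI[of _ "p1 \<odot>\<^sub>t q2 \<oplus>\<^sub>t p2 \<odot>\<^sub>t q1"], rule exI[of _ "q1 \<odot>\<^sub>t q2"], intro conjI)
      apply (rule eqa)
      apply (rule tpoly_add[OF tpoly_mul[OF 1(2) 2(3)] tpoly_mul[OF 2(2) 1(3)]])
     apply (rule tpoly_mul[OF 1(3) 2(3)])
    apply (rule qq)
    done
qed

lemma trat_ninf: "f \<in> trat \<Longrightarrow> f x \<noteq> \<infinity>"
proof -
  assume "f \<in> trat"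
  then obtain p q where 1: "f = (\<lambda>x. p x - q x)" "p \<in> tpoly" "q \<in> tpoly" "q \<noteq> (\<lambda>x. -\<infinity>)"
    unfolding trat_def by blast
  obtain r where "q x = ereal r" using tpoly_real 1 by metis
  then show ?thesis using 1 tpoly_ninf[of p x] by (cases "p x") auto
qed

definition Cx :: "real^'n \<Rightarrow> ('n::finite) trel" where
  "Cx x = {(f,g). f \<in> trat \<and> g \<in> trat \<and> f x = g x}"

lemma Cx_cong: "tcongruence (Cx (x :: real^'n::finite))"
  unfolding tcongruence_def
proof (intro conjI allI impI)
  show "Cx x \<subseteq> trat \<times> trat" unfolding Cx_def by auto
  show "refl_on trat (Cx x)" unfolding refl_on_def Cx_def by auto
  show "sym (Cx x)" unfolding sym_def Cx_def by auto
  show "trans (Cx x)" unfolding trans_def Cx_def by auto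
  fix a b c :: "'n tfun" assume h: "(a, b) \<in> Cx x \<and> c \<in> trat"
  then have "a \<in> trat" "b \<in> trat" "a x = b x" "c \<in> trat" unfolding Cx_def by auto
  then have m: "a \<oplus>\<^sub>t c \<in> trat" "b \<oplus>\<^sub>t c \<in> trat" "a \<odot>\<^sub>t c \<in> trat" "b \<odot>\<^sub>t c \<in> trat"
    "a x = b x" using trat_closed by auto
  have "(a \<oplus>\<^sub>t c) x = (b \<oplus>\<^sub>t c) x" "(a \<odot>\<^sub>t c) x = (b \<odot>\<^sub>t c) x"
    using m(5) by (simp_all only: tadd_def tmul_def)
  then show "(a \<oplus>\<^sub>t c, b \<oplus>\<^sub>t c) \<in> Cx x" "(a \<odot>\<^sub>t c, b \<odot>\<^sub>t c) \<in> Cx x"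
    using m(1-4) unfolding Cx_def by blast+
qed

lemma gen_sub: "tcongruence C \<Longrightarrow> R \<subseteq> C \<Longrightarrow> tcong_gen R \<subseteq> C"
  unfolding tcong_gen_def by blast

lemma gen_sup: "R \<subseteq> tcong_gen R"
  unfolding tcong_gen_def by blast

lemma tV_anti: "A \<subseteq> B \<Longrightarrow> tV B \<subseteq> tV A"
  unfolding tV_def by blast

lemma tV_Cx: "R \<subseteq> Cx x \<Longrightarrow> x \<in> tV (tcong_gen R)"
proof -
  assume "R \<subseteq> Cx x"
  then have "tcong_gen R \<subseteq> Cx x" using gen_sub[OF Cx_cong] by blast
  then show ?thesis unfolding tV_def Cx_def by blast
qed

lemma twist_ne:
  fixes u v w z :: ereal
  assumes "u \<noteq> \<infinity>" "v \<noteq> \<infinity>" "w \<noteq> \<infinity>" "z \<noteq> \<infinity>" "u \<noteq> v" "w \<noteq> z"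
  shows "max (u+w) (v+z) \<noteq> max (u+z) (v+w)"
  using assms by (cases u; cases v; cases w; cases z) (auto simp: max_def)

lemma twist_vals: "twist (f1,f2) (g1,g2) =
  (\<lambda>x. max (f1 x + g1 x) (f2 x + g2 x), \<lambda>x. max (f1 x + g2 x) (f2 x + g1 x))"
  by (simp add: twist_def tadd_def tmul_def)

lemma twist_trat:
  assumes "f1 \<in> trat" "f2 \<in> trat" "g1 \<in> trat" "g2 \<in> trat"
  shows "fst (twist (f1,f2) (g1,g2)) \<in> trat" "snd (twist (f1,f2) (g1,g2)) \<in> trat"
proof -
  have "f1 \<odot>\<^sub>t g1 \<oplus>\<^sub>t f2 \<odot>\<^sub>t g2 \<in> trat"
    by (intro trat_closed(1) trat_closed(2) assms)
  moreover have "f1 \<odot>\<^sub>t g2 \<oplus>\<^sub>t f2 \<odot>\<^sub>t g1 \<in> trat"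
    by (intro trat_closed(1) trat_closed(2) assms)
  ultimately show "fst (twist (f1,f2) (g1,g2)) \<in> trat" "snd (twist (f1,f2) (g1,g2)) \<in> trat"
    unfolding twist_def by simp_all
qed

theorem proposition3p8:
  fixes \<Lambda> :: "'l set" and E :: "'l \<Rightarrow> ('n::finite) trel" and F1 F2 :: "'n trel"
  assumes "\<forall>l\<in>\<Lambda>. tcongruence (E l)"
    and "tcongruence F1" and "tcongruence F2"
  shows "tV (Id_on (trat :: 'n tfun set)) = UNIV
    \<and> tV ((trat :: 'n tfun set) \<times> trat) = {}
    \<and> tV (tcong_gen (\<Union>l\<in>\<Lambda>. E l)) = (\<Inter>l\<in>\<Lambda>. tV (E l))
    \<and> tV (twisted_prod F1 F2) = tV F1 \<union> tV F2"
proof (intro conjI)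
  show "tV (Id_on (trat :: 'n tfun set)) = UNIV" unfolding tV_def Id_on_def by auto
  show "tV ((trat :: 'n tfun set) \<times> trat) = {}"
  proof -
    define S :: "(real \<times> ('n \<Rightarrow> nat)) set" where "S = {(0, \<lambda>_. 0)}"
    have p: "pm S \<in> tpoly" "pm S \<noteq> (\<lambda>x. -\<infinity>)" "pm S x = 0" for x
      using pm_in[of S] by (auto simp: S_def pm_def tmonom_def fun_eq_iff)
    have m1: "(\<lambda>x. pm S x - pm S x) \<in> (trat :: 'n tfun set)" unfolding trat_def using p by blast
    have minf: "(\<lambda>x. -\<infinity>) \<in> (tpoly :: 'n tfun set)" by (simp add: tpoly_def)
    have m2: "(\<lambda>x. -\<infinity> - pm S x) \<in> (trat :: 'n tfun set)" unfolding trat_def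
      apply (rule CollectI, rule exI[of _ "\<lambda>x::real^'n. -\<infinity>"], rule exI[of _ "pm S"])
      using minf p by simp
    have mem: "((\<lambda>x. pm S x - pm S x), (\<lambda>x. -\<infinity> - pm S x)) \<in> (trat :: 'n tfun set) \<times> trat"
      using m1 m2 by (rule SigmaI)
    show ?thesis
    proof (rule equals0I)
      fix x assume "x \<in> tV ((trat :: 'n tfun set) \<times> trat)"
      then have "\<forall>(f, g)\<in>(trat :: 'n tfun set) \<times> trat. f x = g x" by (simp add: tV_def)
      from bspec[OF this mem] have "pm S x - pm S x = -\<infinity> - pm S x" by simp
      then show False using p(3)[of x] by simp
    qed
  qed
  show "tV (tcong_gen (\<Union>l\<in>\<Lambda>. E l)) = (\<Inter>l\<in>\<Lambda>. tV (E l))"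
  proof
    show "tV (tcong_gen (\<Union>l\<in>\<Lambda>. E l)) \<subseteq> (\<Inter>l\<in>\<Lambda>. tV (E l))"
    proof (rule INT_greatest)
      fix l assume "l \<in> \<Lambda>"
      then have "E l \<subseteq> tcong_gen (\<Union>l\<in>\<Lambda>. E l)" using gen_sup by blast
      then show "tV (tcong_gen (\<Union>l\<in>\<Lambda>. E l)) \<subseteq> tV (E l)" by (rule tV_anti)
    qed
    show "(\<Inter>l\<in>\<Lambda>. tV (E l)) \<subseteq> tV (tcong_gen (\<Union>l\<in>\<Lambda>. E l))"
    proof
      fix x assume x: "x \<in> (\<Inter>l\<in>\<Lambda>. tV (E l))"
      have "(\<Union>l\<in>\<Lambda>. E l) \<subseteq> Cx x"
      proof
        fix p assume "p \<in> (\<Union>l\<in>\<Lambda>. E l)"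
        then obtain l where l: "l \<in> \<Lambda>" "p \<in> E l" by blast
        obtain f g where pfg: "p = (f, g)" by (cases p)
        have "E l \<subseteq> trat \<times> trat" using assms(1) l(1) unfolding tcongruence_def by blast
        then have "f \<in> trat" "g \<in> trat" using l(2) pfg by auto
        moreover have "x \<in> tV (E l)" using x l(1) by blast
        then have "f x = g x" using l(2) pfg unfolding tV_def by auto
        ultimately show "p \<in> Cx x" unfolding Cx_def pfg by simp
      qed
      then show "x \<in> tV (tcong_gen (\<Union>l\<in>\<Lambda>. E l))" by (rule tV_Cx)
    qed
  qed
  show "tV (twisted_prod F1 F2) = tV F1 \<union> tV F2"
  proof
    show "tV (twisted_prod F1 F2) \<subseteq> tV F1 \<union> tV F2"
    proof
      fix x assume x: "x \<in> tV (twisted_prod F1 F2)"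
      show "x \<in> tV F1 \<union> tV F2"
      proof (rule ccontr)
        assume "x \<notin> tV F1 \<union> tV F2"
        then have n1: "x \<notin> tV F1" and n2: "x \<notin> tV F2" by simp_all
        from n1 obtain p where p: "p \<in> F1" "fst p x \<noteq> snd p x" unfolding tV_def by (auto simp: case_prod_beta)
        from n2 obtain q where q: "q \<in> F2" "fst q x \<noteq> snd q x" unfolding tV_def by (auto simp: case_prod_beta)
        obtain f1 f2 where pf: "p = (f1, f2)" by (cases p)
        obtain g1 g2 where qg: "q = (g1, g2)" by (cases q)
        have a: "(f1,f2) \<in> F1" "f1 x \<noteq> f2 x" "(g1,g2) \<in> F2" "g1 x \<noteq> g2 x"
          using p q pf qg by simp_all
        have "twist (f1,f2) (g1,g2) \<in> {twist a b | a b. a \<in> F1 \<and> b \<in> F2}"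
          apply (rule CollectI, rule exI[of _ "(f1,f2)"], rule exI[of _ "(g1,g2)"])
          using a(1,3) by simp
        then have tw: "twist (f1,f2) (g1,g2) \<in> twisted_prod F1 F2"
          unfolding twisted_prod_def by (rule subsetD[OF gen_sup])
        have x': "\<forall>(f, g)\<in>twisted_prod F1 F2. f x = g x"
          using x unfolding tV_def by (rule CollectD)
        from bspec[OF x' tw] have eq: "max (f1 x + g1 x) (f2 x + g2 x) = max (f1 x + g2 x) (f2 x + g1 x)"
          by (simp add: twist_vals)
        have "f1 \<in> trat" "f2 \<in> trat" "g1 \<in> trat" "g2 \<in> trat"
          using a(1,3) assms(2,3) unfolding tcongruence_def by blast+
        then have "max (f1 x + g1 x) (f2 x + g2 x) \<noteq> max (f1 x + g2 x) (f2 x + g1 x)"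
          using a(2,4) by (intro twist_ne trat_ninf)
        then show False using eq by contradiction
      qed
    qed
    show "tV F1 \<union> tV F2 \<subseteq> tV (twisted_prod F1 F2)"
    proof
      fix x assume x: "x \<in> tV F1 \<union> tV F2"
      have "{twist a b | a b. a \<in> F1 \<and> b \<in> F2} \<subseteq> Cx x"
      proof
        fix t assume "t \<in> {twist a b | a b. a \<in> F1 \<and> b \<in> F2}"
        then obtain f1 f2 g1 g2 where a: "(f1,f2) \<in> F1" "(g1,g2) \<in> F2" "t = twist (f1,f2) (g1,g2)"
          by auto
        have tr: "f1 \<in> trat" "f2 \<in> trat" "g1 \<in> trat" "g2 \<in> trat"
          using a assms(2,3) unfolding tcongruence_def by auto
        have "f1 x = f2 x \<or> g1 x = g2 x"
        proof (cases "x \<in> tV F1")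
          case True then show ?thesis using a(1) unfolding tV_def by fast
        next
          case False then have "x \<in> tV F2" using x by simp
          then show ?thesis using a(2) unfolding tV_def by fast
        qed
        then have "max (f1 x + g1 x) (f2 x + g2 x) = max (f1 x + g2 x) (f2 x + g1 x)"
        proof
          assume "f1 x = f2 x" then show ?thesis by (simp add: max.commute)
        next
          assume "g1 x = g2 x" then show ?thesis by simp
        qed
        then have "fst t x = snd t x" using a(3) by (simp add: twist_vals)
        moreover have "fst t \<in> trat" "snd t \<in> trat" using twist_trat[OF tr] a(3) by simp_all
        ultimately show "t \<in> Cx x" unfolding Cx_def by (cases t) simp
      qed
      then show "x \<in> tV (twisted_prod F1 F2)" unfolding twisted_prod_def by (rule tV_Cx)
    qed
  qed
qed

end
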